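(* Let $\beta=(\beta_j)_{j\ge0}$ be a sequence of positive numbers (or independent variables), let $\xi_{nk}=\xi_{nk}(\beta)$ be the Stirling polynomials of the second kind generated by $\beta$, and let $\xi^{(1)}_{nk}=\xi_{nk}(\beta^{(1)})$ where $\beta^{(1)}=(\beta_{1+j})_{j\ge0}$. For all $n\ge1$ and $0\le k\le n$, $$\xi_{nk}=\xi^{(1)}_{n-1,k-1}+\xi_{n-1,k}\,\beta_0 .$$
   Context: For a sequence $b=(b_j)_{j\ge0}$ and $\omega=(\varepsilon_1,\dots,\varepsilon_n)\in\{0,1\}^n$ define the weight $w_n(\omega)=\prod_{m=1}^n g_m$, where $g_m=1$ if $\varepsilon_m=0$ and $g_m=b_j$ if $\varepsilon_m=1$, with $j=\#\{l:1\le l\le m-1,\ \varepsilon_l=0\}$. For $n\ge1$, $0\le k\le n$, $\xi_{nk}(b)=\sum w_n(\omega)$ over all $\omega\in\{0,1\}^n$ with exactly $k$ zeros; $\xi_{00}(b)=1$ and $\xi_{nk}(b)=0$ if $k<0$ or $k>n$. *)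

theory Defs
  imports Complex_Main
begin

definition zeros :: "nat list \<Rightarrow> nat" where
  "zeros xs = length (filter (\<lambda>e. e = 0) xs)"

definition weight :: "(nat \<Rightarrow> real) \<Rightarrow> nat list \<Rightarrow> real" where
  "weight b xs = (\<Prod>m<length xs. (if xs ! m = 0 then 1 else b (zeros (take m xs))))"

text \<open>Stirling polynomials of the second kind xi_{nk}(b); k is an integer so that
  xi_{nk} = 0 for k < 0 (and for k > n the index set is empty).\<close>

definition xi :: "(nat \<Rightarrow> real) \<Rightarrow> nat \<Rightarrow> int \<Rightarrow> real" where
  "xi b n k = (\<Sum>xs\<in>{xs. length xs = n \<and> set xs \<subseteq> {0,1} \<and> int (zeros xs) = k}. weight b xs)"

end

theory Submission
  imports Defs
begin

definition W :: "nat \<Rightarrow> int \<Rightarrow> nat list set" where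
  "W n k = {xs. length xs = n \<and> set xs \<subseteq> {0,1} \<and> int (zeros xs) = k}"

lemma W_finite: "finite (W n k)"
proof -
  have "W n k \<subseteq> {xs. set xs \<subseteq> {0,1} \<and> length xs = n}" by (auto simp: W_def)
  thus ?thesis using finite_lists_length_eq[of "{0::nat,1}" n] finite_subset by blast
qed

lemma zeros_take0: "zeros (take (Suc i) (0#xs)) = 1 + zeros (take i xs)"
  by (simp add: zeros_def)

lemma zeros_take1: "x \<noteq> 0 \<Longrightarrow> zeros (take (Suc i) (x#xs)) = zeros (take i xs)"
  by (simp add: zeros_def)

lemma weight_Cons0: "weight b (0#xs) = weight (\<lambda>j. b (1 + j)) xs"
proof -
  have "weight b (0#xs) = (\<Prod>i<length xs. (if (0#xs) ! Suc i = 0 then 1 else b (zeros (take (Suc i) (0#xs)))))"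
    unfolding weight_def by (simp only: length_Cons prod.lessThan_Suc_shift) simp
  also have "\<dots> = weight (\<lambda>j. b (1 + j)) xs"
    unfolding weight_def by (rule prod.cong) (simp_all only: zeros_take0 nth_Cons_Suc)
  finally show ?thesis .
qed

lemma weight_Cons1: "x \<noteq> 0 \<Longrightarrow> weight b (x#xs) = b 0 * weight b xs"
proof -
  assume x: "x \<noteq> 0"
  have "weight b (x#xs) = b 0 * (\<Prod>i<length xs. (if (x#xs) ! Suc i = 0 then 1 else b (zeros (take (Suc i) (x#xs)))))"
    unfolding weight_def using x by (simp only: length_Cons prod.lessThan_Suc_shift) (simp add: zeros_def)
  also have "(\<Prod>i<length xs. (if (x#xs) ! Suc i = 0 then 1 else b (zeros (take (Suc i) (x#xs))))) = weight b xs"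
    unfolding weight_def by (rule prod.cong) (simp_all only: zeros_take1[OF x] nth_Cons_Suc)
  finally show ?thesis .
qed

lemma W_Suc: "W (Suc m) k = (Cons 0) ` W m (k - 1) \<union> (Cons 1) ` W m k"
proof (rule set_eqI)
  fix xs
  show "xs \<in> W (Suc m) k \<longleftrightarrow> xs \<in> (Cons 0) ` W m (k - 1) \<union> (Cons 1) ` W m k"
  proof
    assume "xs \<in> W (Suc m) k"
    then obtain y ys where xs: "xs = y # ys" and "length ys = m" and "y \<in> {0,1}"
      and "set ys \<subseteq> {0,1}" and z: "int (zeros (y#ys)) = k"
      by (cases xs) (auto simp: W_def)
    thus "xs \<in> (Cons 0) ` W m (k - 1) \<union> (Cons 1) ` W m k"
      by (auto simp: W_def zeros_def)
  next
    assume "xs \<in> (Cons 0) ` W m (k - 1) \<union> (Cons 1) ` W m k"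
    thus "xs \<in> W (Suc m) k" by (auto simp: W_def zeros_def)
  qed
qed

theorem theorem4p2:
  fixes \<beta> :: "nat \<Rightarrow> real" and n :: nat and k :: int
  assumes "\<And>j. \<beta> j > 0"
    and "n \<ge> 1" and "0 \<le> k" and "k \<le> int n"
  shows "xi \<beta> n k = xi (\<lambda>j. \<beta> (1 + j)) (n - 1) (k - 1) + xi \<beta> (n - 1) k * \<beta> 0"
proof -
  obtain m where n: "n = Suc m" using assms(2) by (cases n) auto
  have xiW: "xi b n k = sum (weight b) (W n k)" for b n k unfolding xi_def W_def by simp
  have "xi \<beta> n k = sum (weight \<beta>) ((Cons 0) ` W m (k - 1)) + sum (weight \<beta>) ((Cons 1) ` W m k)"
    unfolding xiW n W_Suc
    by (rule sum.union_disjoint) (auto simp: W_finite)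
  also have "sum (weight \<beta>) ((Cons 0) ` W m (k - 1)) = xi (\<lambda>j. \<beta> (1 + j)) m (k - 1)"
    by (simp add: sum.reindex xiW weight_Cons0)
  also have "sum (weight \<beta>) ((Cons 1) ` W m k) = xi \<beta> m k * \<beta> 0"
    by (simp add: sum.reindex xiW weight_Cons1 sum_distrib_left mult.commute)
  finally show ?thesis using n by simp
qed

end
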